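(* Fix $K\ge1$, points $\mathbf{w}_1,\dots,\mathbf{w}_K\in\mathbb{R}^2$ and constants $H>0$, $\rho_0>0$, $\sigma^2>0$, $r^*>0$, $P_c\ge0$, $E_1,\dots,E_K>0$, $\tilde P_1,\dots,\tilde P_K>0$. For $\mathbf{q}\in\mathbb{R}^2$ write $d_k=\sqrt{\|\mathbf{q}-\mathbf{w}_k\|^2+H^2}$ and $h_k=\rho_0/d_k^2$. Problem (P1): minimize $\zeta$ over $(\zeta,\mathbf{q},\mathbf{p},\pi)$ with $\zeta\in\mathbb{R}$, $\mathbf q\in\mathbb{R}^2$, $\mathbf p\in\mathbb{R}^K$, $\pi$ a permutation of $\{1,\dots,K\}$, subject to, for all $m$: $p_{\pi(m)}+P_c\le\zeta E_{\pi(m)}$; $0\le p_{\pi(m)}\le\tilde P_{\pi(m)}$; $\log_2\big(1+\frac{p_{\pi(m)}h_{\pi(m)}}{\sum_{n=m+1}^Kp_{\pi(n)}h_{\pi(n)}+\sigma^2}\big)\ge r^*$; and $d_{\pi(1)}\le d_{\pi(2)}\le\dots\le d_{\pi(K)}$. Problem (P2): minimize $\zeta$ over $(\zeta,\mathbf{q},\mathbf{p},\boldsymbol\alpha)$ with $\boldsymbol\alpha=(\alpha_{k,j})_{k,j=1}^K$, subject to, for all $k$: $p_k+P_c\le\zeta E_k$; $0\le p_k\le\tilde P_k$; $\log_2\big(1+\frac{p_kh_k}{\sum_{j\ne k}\alpha_{k,j}p_jh_j+\sigma^2}\big)\ge r^*$; for all $k\ne j$: $\alpha_{k,j}=0$ if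 $d_k>d_j$, $\alpha_{k,j}=1$ if $d_k<d_j$, $\alpha_{k,j}\in\{0,1\}$ if $d_k=d_j$; $\alpha_{k,k}=0$; $\alpha_{k,j}+\alpha_{j,k}=1$ for $k\ne j$; $\alpha_{k,j}+\alpha_{j,i}-1\le\alpha_{k,i}$ for all $k,j,i$. Let $(\zeta,\mathbf{q},\mathbf{p},\boldsymbol\alpha)$ be feasible for (P2), and let $f(k)=K-\sum_{j=1}^K\alpha_{k,j}$. Then $f$ is a permutation of $\{1,\dots,K\}$, and setting $\pi'=f^{-1}$ and $\mathbf p'$ with $p'_{\pi'(m)}=p_{f^{-1}(m)}$ for all $m$, the tuple $(\zeta,\mathbf q,\mathbf p',\pi')$ is feasible for (P1); moreover the objective value of (P1) at $(\mathbf q,\mathbf p',\pi')$ equals that of (P2) at $(\mathbf q,\mathbf p,\boldsymbol\alpha)$ (both equal the least admissible $\zeta$, namely $\max_k (p_k+P_c)/E_k$).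
   Context: (P1) models maximizing the minimum device lifetime $E_k/(p_k+P_c)$ (via $\zeta=1/\text{lifetime}$) in uplink NOMA to a UAV with permutation decoding order $\pi$ ($\pi(m)=k$: device $k$ is decoded $m$-th); (P2) is the same with binary decoding-order variables $\alpha_{k,j}$ ($\alpha_{k,j}=1$: device $k$ decoded before device $j$). $\tilde P_k$ is the allowable transmit power of device $k$. *)

theory Defs
  imports "HOL-Analysis.Analysis"
begin

text \<open>Devices are indexed by 1..K. Distance from UAV position q (at altitude H) to device k.\<close>
definition dist_dev :: "real \<Rightarrow> (nat \<Rightarrow> real^2) \<Rightarrow> real^2 \<Rightarrow> nat \<Rightarrow> real" where
  "dist_dev H w q k = sqrt ((norm (q - w k))^2 + H^2)"

definition gain :: "real \<Rightarrow> real \<Rightarrow> (nat \<Rightarrow> real^2) \<Rightarrow> real^2 \<Rightarrow> nat \<Rightarrow> real" where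
  "gain rho0 H w q k = rho0 / (dist_dev H w q k)^2"

text \<open>Feasibility for (P1): ord m = k means device k is decoded m-th.\<close>
definition feasible_P1 ::
  "nat \<Rightarrow> real \<Rightarrow> real \<Rightarrow> real \<Rightarrow> real \<Rightarrow> real \<Rightarrow> (nat \<Rightarrow> real) \<Rightarrow> (nat \<Rightarrow> real)
   \<Rightarrow> (nat \<Rightarrow> real^2) \<Rightarrow> real \<Rightarrow> real^2 \<Rightarrow> (nat \<Rightarrow> real) \<Rightarrow> (nat \<Rightarrow> nat) \<Rightarrow> bool" where
  "feasible_P1 K H rho0 sigma2 rstar Pc E Pt w zeta q p ord \<longleftrightarrow>
     bij_betw ord {1..K} {1..K} \<and>
     (\<forall>m\<in>{1..K}.
        p (ord m) + Pc \<le> zeta * E (ord m) \<and>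
        0 \<le> p (ord m) \<and> p (ord m) \<le> Pt (ord m) \<and>
        log 2 (1 + p (ord m) * gain rho0 H w q (ord m) /
           ((\<Sum>n\<in>{m+1..K}. p (ord n) * gain rho0 H w q (ord n)) + sigma2)) \<ge> rstar) \<and>
     (\<forall>m\<in>{1..<K}. dist_dev H w q (ord m) \<le> dist_dev H w q (ord (m+1)))"

text \<open>Feasibility for (P2): alpha k j = 1 means device k is decoded before device j.\<close>
definition feasible_P2 ::
  "nat \<Rightarrow> real \<Rightarrow> real \<Rightarrow> real \<Rightarrow> real \<Rightarrow> real \<Rightarrow> (nat \<Rightarrow> real) \<Rightarrow> (nat \<Rightarrow> real)
   \<Rightarrow> (nat \<Rightarrow> real^2) \<Rightarrow> real \<Rightarrow> real^2 \<Rightarrow> (nat \<Rightarrow> real) \<Rightarrow> (nat \<Rightarrow> nat \<Rightarrow> int) \<Rightarrow> bool" where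
  "feasible_P2 K H rho0 sigma2 rstar Pc E Pt w zeta q p alpha \<longleftrightarrow>
     (\<forall>k\<in>{1..K}.
        p k + Pc \<le> zeta * E k \<and>
        0 \<le> p k \<and> p k \<le> Pt k \<and>
        log 2 (1 + p k * gain rho0 H w q k /
           ((\<Sum>j\<in>{1..K} - {k}. of_int (alpha k j) * p j * gain rho0 H w q j) + sigma2)) \<ge> rstar) \<and>
     (\<forall>k\<in>{1..K}. \<forall>j\<in>{1..K}. k \<noteq> j \<longrightarrow>
        (dist_dev H w q k > dist_dev H w q j \<longrightarrow> alpha k j = 0) \<and>
        (dist_dev H w q k < dist_dev H w q j \<longrightarrow> alpha k j = 1) \<and>
        (dist_dev H w q k = dist_dev H w q j \<longrightarrow> alpha k j \<in> {0, 1})) \<and>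
     (\<forall>k\<in>{1..K}. alpha k k = 0) \<and>
     (\<forall>k\<in>{1..K}. \<forall>j\<in>{1..K}. k \<noteq> j \<longrightarrow> alpha k j + alpha j k = 1) \<and>
     (\<forall>k\<in>{1..K}. \<forall>j\<in>{1..K}. \<forall>i\<in>{1..K}. alpha k j + alpha j i - 1 \<le> alpha k i)"

definition least_elem :: "real set \<Rightarrow> real \<Rightarrow> bool" where
  "least_elem S x \<longleftrightarrow> x \<in> S \<and> (\<forall>y\<in>S. x \<le> y)"

end

theory Submission
  imports Defs
begin

locale tour =
  fixes A :: "nat set" and alpha :: "nat \<Rightarrow> nat \<Rightarrow> int"
  assumes finA: "finite A"
    and a01: "\<And>k j. k\<in>A \<Longrightarrow> j\<in>A \<Longrightarrow> alpha k j \<in> {0,1}"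
    and akk: "\<And>k. k\<in>A \<Longrightarrow> alpha k k = 0"
    and anti: "\<And>k j. k\<in>A \<Longrightarrow> j\<in>A \<Longrightarrow> k \<noteq> j \<Longrightarrow> alpha k j + alpha j k = 1"
    and tr: "\<And>k j i. k\<in>A \<Longrightarrow> j\<in>A \<Longrightarrow> i\<in>A \<Longrightarrow> alpha k j + alpha j i - 1 \<le> alpha k i"
begin

definition S where "S k = {j\<in>A. alpha k j = 1}"

lemma sum_S: "k \<in> A \<Longrightarrow> (\<Sum>j\<in>A. alpha k j) = int (card (S k))"
proof -
  assume k: "k \<in> A"
  have "(\<Sum>j\<in>A. alpha k j) = (\<Sum>j\<in>A. if alpha k j = 1 then 1 else 0)"
    using a01[OF k] by (intro sum.cong) auto
  also have "\<dots> = (\<Sum>j\<in>S k. 1)"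
    unfolding S_def using sum.inter_filter[OF finA, of "\<lambda>_. (1::int)" "\<lambda>j. alpha k j = 1"] by simp
  finally show ?thesis by simp
qed

lemma S_lt: "k \<in> A \<Longrightarrow> card (S k) < card A"
proof -
  assume k: "k \<in> A"
  have "S k \<subseteq> A - {k}" using akk[OF k] unfolding S_def by auto
  then have "card (S k) \<le> card (A - {k})" using finA by (intro card_mono) auto
  also have "\<dots> < card A" using finA k by (rule card_Diff1_less)
  finally show ?thesis .
qed

lemma S_mono: "k \<in> A \<Longrightarrow> j \<in> A \<Longrightarrow> alpha k j = 1 \<Longrightarrow> card (S j) < card (S k)"
proof -
  assume k: "k \<in> A" and j: "j \<in> A" and a: "alpha k j = 1"
  have "S j \<subseteq> S k - {j}"
  proof
    fix i assume "i \<in> S j"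
    then have i: "i \<in> A" "alpha j i = 1" unfolding S_def by auto
    have "alpha k i \<ge> 1" using tr[OF k j i(1)] a i(2) by simp
    then have "alpha k i = 1" using a01[OF k i(1)] by auto
    moreover have "i \<noteq> j" using i akk[OF j] by auto
    ultimately show "i \<in> S k - {j}" using i unfolding S_def by auto
  qed
  moreover have "j \<in> S k" using j a unfolding S_def by auto
  moreover have "finite (S k)" using finA unfolding S_def by auto
  ultimately have "card (S j) \<le> card (S k - {j})" "card (S k - {j}) < card (S k)"
    by (meson card_mono finite_Diff, meson card_Diff1_less)
  then show ?thesis by linarith
qed

lemma alpha_iff: "k \<in> A \<Longrightarrow> j \<in> A \<Longrightarrow> k \<noteq> j \<Longrightarrow> alpha k j = 1 \<longleftrightarrow> card (S j) < card (S k)"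
proof -
  assume k: "k \<in> A" and j: "j \<in> A" and kj: "k \<noteq> j"
  show ?thesis
  proof
    assume "alpha k j = 1" then show "card (S j) < card (S k)" using S_mono k j by auto
  next
    assume c: "card (S j) < card (S k)"
    show "alpha k j = 1"
    proof (rule ccontr)
      assume "alpha k j \<noteq> 1"
      then have "alpha j k = 1" using anti[OF k j kj] a01[OF k j] by auto
      then show False using S_mono[OF j k] c by simp
    qed
  qed
qed


end

lemma aux_iff: "(\<forall>k\<in>A. P k \<and> Q k) \<and> R \<Longrightarrow> ((\<forall>k\<in>A. P' k \<and> Q k) \<and> R) = (\<forall>k\<in>A. P' k)"
  by blast

lemma aux_iff2: "B \<Longrightarrow> (\<forall>m\<in>A. Q m) \<Longrightarrow> D \<Longrightarrow> (B \<and> (\<forall>m\<in>A. P m \<and> Q m) \<and> D) = (\<forall>m\<in>A. P m)"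
  by blast

theorem proposition2:
  fixes K :: nat and H rho0 sigma2 rstar Pc zeta :: real
    and E Pt p :: "nat \<Rightarrow> real" and w :: "nat \<Rightarrow> real^2" and q :: "real^2"
    and alpha :: "nat \<Rightarrow> nat \<Rightarrow> int"
  assumes "K \<ge> 1" and "H > 0" and "rho0 > 0" and "sigma2 > 0" and "rstar > 0" and "Pc \<ge> 0"
    and "\<forall>k\<in>{1..K}. E k > 0" and "\<forall>k\<in>{1..K}. Pt k > 0"
    and feas: "feasible_P2 K H rho0 sigma2 rstar Pc E Pt w zeta q p alpha"
  defines "f \<equiv> (\<lambda>k. nat (int K - (\<Sum>j\<in>{1..K}. alpha k j)))"
  defines "ord' \<equiv> inv_into {1..K} f"
  shows "bij_betw f {1..K} {1..K} \<and>
    (\<forall>p'. (\<forall>m\<in>{1..K}. p' (ord' m) = p (inv_into {1..K} f m)) \<longrightarrow>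
       feasible_P1 K H rho0 sigma2 rstar Pc E Pt w zeta q p' ord' \<and>
       least_elem {z. feasible_P1 K H rho0 sigma2 rstar Pc E Pt w z q p' ord'}
               (Max ((\<lambda>k. (p k + Pc) / E k) ` {1..K})) \<and>
       least_elem {z. feasible_P2 K H rho0 sigma2 rstar Pc E Pt w z q p alpha}
               (Max ((\<lambda>k. (p k + Pc) / E k) ` {1..K})))"
proof -
  define A where "A = {1..K}"
  define d where "d = dist_dev H w q"
  define g where "g = gain rho0 H w q"
  note Edef = assms(7)
  have FF: "(\<forall>k\<in>A. p k + Pc \<le> zeta * E k \<and> 0 \<le> p k \<and> p k \<le> Pt k \<and>
        log 2 (1 + p k * g k / ((\<Sum>j\<in>A - {k}. of_int (alpha k j) * p j * g j) + sigma2)) \<ge> rstar) \<and>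
     (\<forall>k\<in>A. \<forall>j\<in>A. k \<noteq> j \<longrightarrow>
        (d k > d j \<longrightarrow> alpha k j = 0) \<and> (d k < d j \<longrightarrow> alpha k j = 1) \<and>
        (d k = d j \<longrightarrow> alpha k j \<in> {0, 1})) \<and>
     (\<forall>k\<in>A. alpha k k = 0) \<and>
     (\<forall>k\<in>A. \<forall>j\<in>A. k \<noteq> j \<longrightarrow> alpha k j + alpha j k = 1) \<and>
     (\<forall>k\<in>A. \<forall>j\<in>A. \<forall>i\<in>A. alpha k j + alpha j i - 1 \<le> alpha k i)"
    unfolding A_def d_def g_def by (rule feas[unfolded feasible_P2_def])
  note F1 = FF[THEN conjunct1]
  note F2 = FF[THEN conjunct2, THEN conjunct1]
  note F3 = FF[THEN conjunct2, THEN conjunct2, THEN conjunct1]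
    FF[THEN conjunct2, THEN conjunct2, THEN conjunct2, THEN conjunct1]
    FF[THEN conjunct2, THEN conjunct2, THEN conjunct2, THEN conjunct2]
  interpret tour A alpha
  proof
    show "finite A" unfolding A_def by simp
  next
    fix k j assume "k \<in> A" "j \<in> A"
    then show "alpha k j \<in> {0,1}" using F2 F3(1)
      proof (cases "k = j")
      case True then show ?thesis using F3(1) \<open>k \<in> A\<close> by simp
    next
      case False
      then have "(d k > d j \<longrightarrow> alpha k j = 0) \<and> (d k < d j \<longrightarrow> alpha k j = 1) \<and>
        (d k = d j \<longrightarrow> alpha k j \<in> {0, 1})" using F2 \<open>k \<in> A\<close> \<open>j \<in> A\<close> by blast
      then show ?thesis by (cases "d k < d j"; cases "d j < d k") auto
    qed
  next
    fix k assume "k \<in> A" then show "alpha k k = 0" using F3(1) by blast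
  next
    fix k j assume "k \<in> A" "j \<in> A" "k \<noteq> j"
    then show "alpha k j + alpha j k = 1" using F3(2) by blast
  next
    fix k j i assume "k \<in> A" "j \<in> A" "i \<in> A"
    then show "alpha k j + alpha j i - 1 \<le> alpha k i" using F3(3) by blast
  qed
  have cardA: "card A = K" unfolding A_def by simp
  have fS: "f k = K - card (S k)" if "k \<in> A" for k
    using sum_S[OF that] unfolding f_def A_def by simp
  have fA: "f k \<in> A" if "k \<in> A" for k
    using fS[OF that] S_lt[OF that] cardA unfolding A_def by auto
  have flt: "alpha k j = 1 \<longleftrightarrow> f k < f j" if "k \<in> A" "j \<in> A" "k \<noteq> j" for k j
    using alpha_iff[OF that] fS[OF that(1)] fS[OF that(2)] S_lt[OF that(1)] S_lt[OF that(2)] cardA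
    by auto
  have inj: "inj_on f A"
  proof (rule inj_onI)
    fix k j assume k: "k \<in> A" and j: "j \<in> A" and e: "f k = f j"
    show "k = j"
    proof (rule ccontr)
      assume kj: "k \<noteq> j"
      then have "alpha k j = 1 \<or> alpha j k = 1" using anti[OF k j kj] a01[OF k j] by auto
      then show False using flt[OF k j kj] flt[OF j k] kj e by auto
    qed
  qed
  have imgA: "f ` A = A"
    using endo_inj_surj[of A f] inj fA finA by auto
  have bij: "bij_betw f A A" using inj imgA by (simp add: bij_betw_def)
  have ordA: "ord' m \<in> A" if "m \<in> A" for m
    using that imgA unfolding ord'_def A_def[symmetric] by (metis inv_into_into)
  have ford: "f (ord' m) = m" if "m \<in> A" for m
    using that imgA unfolding ord'_def A_def[symmetric] by (metis f_inv_into_f)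
  have bijo: "bij_betw ord' A A"
    using bij_betw_inv_into[OF bij] unfolding ord'_def A_def by simp
  define M where "M = Max ((\<lambda>k. (p k + Pc) / E k) ` A)"
  have Mge: "(p k + Pc) / E k \<le> M" if "k \<in> A" for k
    unfolding M_def using that finA by (intro Max_ge) auto
  have Mfeas: "p k + Pc \<le> z * E k \<longleftrightarrow> (p k + Pc) / E k \<le> z" if "k \<in> A" for k z
    using Edef that unfolding A_def by (auto simp: pos_divide_le_eq)
  have Mleast: "M \<le> z" if "\<forall>k\<in>A. p k + Pc \<le> z * E k" for z
  proof -
    have "A \<noteq> {}" unfolding A_def using assms(1) by auto
    then have "M \<in> (\<lambda>k. (p k + Pc) / E k) ` A" unfolding M_def using finA by (intro Max_in) auto
    then obtain k where "k \<in> A" "M = (p k + Pc) / E k" by auto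
    then show ?thesis using that Mfeas by auto
  qed
  have P2iff: "feasible_P2 K H rho0 sigma2 rstar Pc E Pt w z q p alpha \<longleftrightarrow> (\<forall>k\<in>A. p k + Pc \<le> z * E k)" for z
    unfolding feasible_P2_def A_def[symmetric] d_def[symmetric] g_def[symmetric] by (rule aux_iff[OF FF])
  have sumeq: "(\<Sum>n\<in>{m+1..K}. G (ord' n)) = (\<Sum>j\<in>A - {ord' m}. of_int (alpha (ord' m) j) * G j)"
    if m: "m \<in> A" for m and G :: "nat \<Rightarrow> real"
  proof -
    let ?k = "ord' m"
    have sub: "{m+1..K} \<subseteq> A" unfolding A_def by auto
    have injs: "inj_on ord' {m+1..K}"
      using bij_betw_imp_inj_on[OF bijo] sub inj_on_subset by blast
    have img: "ord' ` {m+1..K} = {j \<in> A - {?k}. f ?k < f j}"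
    proof
      show "ord' ` {m+1..K} \<subseteq> {j \<in> A - {?k}. f ?k < f j}"
      proof
        fix x assume "x \<in> ord' ` {m+1..K}"
        then obtain n where n: "n \<in> {m+1..K}" "x = ord' n" by blast
        then have nA: "n \<in> A" using sub by blast
        have "f x = n" using ford[OF nA] n(2) by simp
        moreover have "f ?k = m" using ford[OF m] .
        ultimately have "f ?k < f x" using n(1) by simp
        moreover have "x \<in> A" using ordA[OF nA] n(2) by simp
        ultimately show "x \<in> {j \<in> A - {?k}. f ?k < f j}" by auto
      qed
    next
      show "{j \<in> A - {?k}. f ?k < f j} \<subseteq> ord' ` {m+1..K}"
      proof
        fix j assume j: "j \<in> {j \<in> A - {?k}. f ?k < f j}"
        then have "f j \<in> {m+1..K}" using ford[OF m] fA[of j] unfolding A_def by auto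
        moreover have "ord' (f j) = j" using j inj unfolding ord'_def A_def[symmetric]
          by (auto intro: inv_into_f_f)
        ultimately show "j \<in> ord' ` {m+1..K}" by (metis imageI)
      qed
    qed
    have "(\<Sum>n\<in>{m+1..K}. G (ord' n)) = (\<Sum>j\<in>{j \<in> A - {?k}. f ?k < f j}. G j)"
      using sum.reindex[OF injs, of G] img by simp
    also have "\<dots> = (\<Sum>j\<in>A - {?k}. if f ?k < f j then G j else 0)"
      using finA by (intro sum.inter_filter) auto
    also have "\<dots> = (\<Sum>j\<in>A - {?k}. of_int (alpha ?k j) * G j)"
    proof (intro sum.cong refl)
      fix j assume j: "j \<in> A - {?k}"
      then have "alpha ?k j \<in> {0,1}" using a01 ordA m by auto
      then show "(if f ?k < f j then G j else 0) = of_int (alpha ?k j) * G j"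
        using flt[of ?k j] j ordA[OF m] by auto
    qed
    finally show ?thesis .
  qed
  have dist_ok: "d (ord' m) \<le> d (ord' (m+1))" if "m \<in> {1..<K}" for m
  proof -
    have m: "m \<in> A" "m+1 \<in> A" using that unfolding A_def by auto
    have ne: "ord' m \<noteq> ord' (m+1)"
    proof
      assume "ord' m = ord' (m+1)"
      then have "f (ord' m) = f (ord' (m+1))" by simp
      then show False using ford[OF m(1)] ford[OF m(2)] by simp
    qed
    have "alpha (ord' m) (ord' (m+1)) = 1" using flt[OF ordA[OF m(1)] ordA[OF m(2)] ne] ford m by simp
    moreover have "(d (ord' m) > d (ord' (m+1)) \<longrightarrow> alpha (ord' m) (ord' (m+1)) = 0)"
      using F2[rule_format, OF ordA[OF m(1)] ordA[OF m(2)] ne] by blast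
    ultimately show ?thesis by auto
  qed
  show ?thesis
  proof (intro conjI allI impI)
    show "bij_betw f {1..K} {1..K}" using bij unfolding A_def .
  next
    fix p' assume hp: "\<forall>m\<in>{1..K}. p' (ord' m) = p (inv_into {1..K} f m)"
    have pp: "p' (ord' m) = p (ord' m)" if "m \<in> A" for m
      using hp that unfolding ord'_def A_def by auto
    have P1iff: "feasible_P1 K H rho0 sigma2 rstar Pc E Pt w z q p' ord' \<longleftrightarrow> (\<forall>k\<in>A. p k + Pc \<le> z * E k)" for z
    proof -
      have ev: "(\<forall>m\<in>A. P (ord' m)) \<longleftrightarrow> (\<forall>k\<in>A. P k)" for P
      proof
        assume h: "\<forall>m\<in>A. P (ord' m)"
        show "\<forall>k\<in>A. P k"
        proof
          fix k assume k: "k \<in> A"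
          have "ord' (f k) = k" using inj k unfolding ord'_def A_def[symmetric] by (rule inv_into_f_f)
          then show "P k" using h fA[OF k] by metis
        qed
      next
        assume "\<forall>k\<in>A. P k" then show "\<forall>m\<in>A. P (ord' m)" using ordA by blast
      qed
      have sinr: "rstar \<le> log 2 (1 + p' (ord' m) * g (ord' m) /
           ((\<Sum>n\<in>{m+1..K}. p' (ord' n) * g (ord' n)) + sigma2))" if m: "m \<in> A" for m
      proof -
        have "(\<Sum>n\<in>{m+1..K}. p' (ord' n) * g (ord' n)) = (\<Sum>n\<in>{m+1..K}. p (ord' n) * g (ord' n))"
          using pp m unfolding A_def by (intro sum.cong) auto
        also have "\<dots> = (\<Sum>j\<in>A - {ord' m}. of_int (alpha (ord' m) j) * (p j * g j))"
          using sumeq[OF m, of "\<lambda>j. p j * g j"] by simp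
        finally have e: "(\<Sum>n\<in>{m+1..K}. p' (ord' n) * g (ord' n)) =
           (\<Sum>j\<in>A - {ord' m}. of_int (alpha (ord' m) j) * p j * g j)" by (simp add: mult.assoc)
        have "rstar \<le> log 2 (1 + p (ord' m) * g (ord' m) / ((\<Sum>j\<in>A - {ord' m}. of_int (alpha (ord' m) j) * p j * g j) + sigma2))"
          using F1 ordA[OF m] by blast
        then show ?thesis unfolding e pp[OF m] .
      qed
      have Qall: "\<forall>m\<in>A. 0 \<le> p' (ord' m) \<and> p' (ord' m) \<le> Pt (ord' m) \<and>
        log 2 (1 + p' (ord' m) * g (ord' m) /
           ((\<Sum>n\<in>{m+1..K}. p' (ord' n) * g (ord' n)) + sigma2)) \<ge> rstar"
      proof
        fix m assume m: "m \<in> A"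
        have "0 \<le> p (ord' m) \<and> p (ord' m) \<le> Pt (ord' m)" using F1 ordA[OF m] by blast
        then show "0 \<le> p' (ord' m) \<and> p' (ord' m) \<le> Pt (ord' m) \<and>
        log 2 (1 + p' (ord' m) * g (ord' m) /
           ((\<Sum>n\<in>{m+1..K}. p' (ord' n) * g (ord' n)) + sigma2)) \<ge> rstar"
          using sinr[OF m] pp[OF m] by simp
      qed
      have Dall: "\<forall>m\<in>{1..<K}. d (ord' m) \<le> d (ord' (m+1))" using dist_ok by blast
      have "feasible_P1 K H rho0 sigma2 rstar Pc E Pt w z q p' ord' \<longleftrightarrow>
            (\<forall>m\<in>A. p' (ord' m) + Pc \<le> z * E (ord' m))"
        unfolding feasible_P1_def A_def[symmetric] g_def[symmetric] d_def[symmetric]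
        by (rule aux_iff2[OF bijo Qall Dall])
      also have "\<dots> \<longleftrightarrow> (\<forall>m\<in>A. p (ord' m) + Pc \<le> z * E (ord' m))"
        using pp by auto
      also have "\<dots> \<longleftrightarrow> (\<forall>k\<in>A. p k + Pc \<le> z * E k)" by (rule ev)
      finally show ?thesis .
    qed
    have Mok: "\<forall>k\<in>A. p k + Pc \<le> M * E k" using Mge Mfeas by auto
    show "feasible_P1 K H rho0 sigma2 rstar Pc E Pt w zeta q p' ord'"
      using P1iff F1 by auto
    show "least_elem {z. feasible_P1 K H rho0 sigma2 rstar Pc E Pt w z q p' ord'}
               (Max ((\<lambda>k. (p k + Pc) / E k) ` {1..K}))"
      unfolding least_elem_def M_def[unfolded A_def, symmetric] using P1iff Mok Mleast by auto
    show "least_elem {z. feasible_P2 K H rho0 sigma2 rstar Pc E Pt w z q p alpha}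
               (Max ((\<lambda>k. (p k + Pc) / E k) ` {1..K}))"
      unfolding least_elem_def M_def[unfolded A_def, symmetric] using P2iff Mok Mleast by auto
  qed
qed

end
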